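(* Let $\mathbb{L}=(p_1,\dots,p_m)$ be a network traffic log, $\mathbb{S}=(q_1,\dots,q_n)$ a signature, and $\epsilon=(\epsilon_1,\dots,\epsilon_{n-1})$ a tolerance vector with all $\epsilon_j>0$. Let $G_{\mathbb{LS}}=(V_{\mathbb{LS}},E_{\mathbb{LS}})$ be the directed graph output by the algorithm sigMatch$(\mathbb{L},\mathbb{S},\epsilon)$ described in the context. Then sigMatch runs in worst-case time $O(m^2 n)$. Furthermore: (a) If $(p_{l[1]},p_{l[2]},\dots,p_{l[n]})$ is an $\epsilon$-valid match of $\mathbb{S}$ in $\mathbb{L}$, then $(v_{l[n],n},v_{l[n-1],n-1},\dots,v_{l[1],1})$ is a directed path in $G_{\mathbb{LS}}$, and $l[1]<l[2]<\cdots<l[n]$. (b) If $(v_{l[n],n},v_{l[n-1],n-1},\dots,v_{l[1],1})$ is a directed path in $G_{\mathbb{LS}}$, then $(p_{l[1]},p_{l[2]},\dots,p_{l[n]})$ is an $\epsilon$-valid match of $\mathbb{S}$ in $\mathbb{L}$, and $l[1]<l[2]<\cdots<l[n]$.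
   Context: A packet $p$ is an 8-tuple whose first field is a real timestamp $p.t$; the remaining 7 fields (device IP, remote server name, remote port, protocol, direction, length, application data) form the base packet $\widehat{p}$ (the tuple with the timestamp deleted). A network traffic log is a sequence of packets $\mathbb{L}=(p_1,\dots,p_m)$ with strictly increasing timestamps. A signature is a sequence of packets $\mathbb{S}=(q_1,\dots,q_n)$ with strictly increasing (relative) timestamps. For $1<j\le n$, $\delta>0$ and $1\le i'<i''\le m$, the pair $(p_{i'},p_{i''})$ is a $\delta$-valid match of $(q_{j-1},q_j)$ if $\widehat{p_{i'}}=\widehat{q_{j-1}}$, $\widehat{p_{i''}}=\widehat{q_j}$, and $|(p_{i''}.t-p_{i'}.t)-(q_j.t-q_{j-1}.t)|\le\delta$. Given a tolerance vector $\epsilon=(\epsilon_1,\dots,\epsilon_{n-1})$ and an increasing sequence of indices $l[1]<\dots<l[n]$ in $\{1,\dots,m\}$, $(p_{l[1]},\dots,p_{l[n]})$ is an $\epsilon$-valid match of $\mathbb{S}$ in $\mathbb{L}$ if $(p_{l[j]},p_{l[j+1]})$ is an $\epsilon_j$-valid match of $(q_j,q_{j+1})$ for every $j=1,\dots,n-1$. Algorithm sigMatch$(\mathbb{L},\mathbb{S},\epsilon)$: initialize $V_{\mathbb{LS}}=E_{\mathbb{LS}}=\emptyset$ (vertices are symbols $v_{i,j}$, $1\le i\le m$, $1\le j\le n$). For $i=1,\dots,m$: if $\widehat{p_i}=\widehat{q_1}$, add $v_{i,1}$ to $V_{\mathbb{LS}}$; then for $j=2,\dots,n$ and for $k=1,\dots,i-1$: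 if $v_{k,j-1}\in V_{\mathbb{LS}}$ and $(p_k,p_i)$ is an $\epsilon_{j-1}$-valid match of $(q_{j-1},q_j)$, add $v_{i,j}$ to $V_{\mathbb{LS}}$ and add the directed edge $(v_{i,j},v_{k,j-1})$ to $E_{\mathbb{LS}}$. Output $G_{\mathbb{LS}}=(V_{\mathbb{LS}},E_{\mathbb{LS}})$. Checking equality of base packets and the time condition is counted as constant time. *)

theory Defs
  imports Complex_Main
begin

text \<open>The base packet type 'b is abstract
  (the 7-tuple of fields); only equality of base packets is used.
  Logs and signatures are 1-indexed functions with an explicit length.\<close>

type_synonym 'b packet = "real \<times> 'b"

definition ts :: "'b packet \<Rightarrow> real" where "ts p = fst p"
definition base :: "'b packet \<Rightarrow> 'b" where "base p = snd p"

definition is_seq :: "(nat \<Rightarrow> 'b packet) \<Rightarrow> nat \<Rightarrow> bool" where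
  "is_seq P len \<longleftrightarrow> (\<forall>i j. 1 \<le> i \<and> i < j \<and> j \<le> len \<longrightarrow> ts (P i) < ts (P j))"

definition delta_valid :: "real \<Rightarrow> 'b packet \<Rightarrow> 'b packet \<Rightarrow> 'b packet \<Rightarrow> 'b packet \<Rightarrow> bool" where
  "delta_valid \<delta> p1 p2 q1 q2 \<longleftrightarrow>
     base p1 = base q1 \<and> base p2 = base q2 \<and>
     \<bar>(ts p2 - ts p1) - (ts q2 - ts q1)\<bar> \<le> \<delta>"

definition pair_valid_match ::
  "(nat \<Rightarrow> 'b packet) \<Rightarrow> nat \<Rightarrow> real \<Rightarrow> nat \<Rightarrow> nat \<Rightarrow> 'b packet \<Rightarrow> 'b packet \<Rightarrow> bool" where
  "pair_valid_match L m \<delta> i1 i2 q1 q2 \<longleftrightarrow>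
     1 \<le> i1 \<and> i1 < i2 \<and> i2 \<le> m \<and> delta_valid \<delta> (L i1) (L i2) q1 q2"

definition eps_valid_match ::
  "(nat \<Rightarrow> 'b packet) \<Rightarrow> nat \<Rightarrow> (nat \<Rightarrow> 'b packet) \<Rightarrow> nat \<Rightarrow> (nat \<Rightarrow> real) \<Rightarrow> (nat \<Rightarrow> nat) \<Rightarrow> bool" where
  "eps_valid_match L m S n eps l \<longleftrightarrow>
     (\<forall>j. 1 \<le> j \<and> j \<le> n \<longrightarrow> 1 \<le> l j \<and> l j \<le> m) \<and>
     (\<forall>j. 1 \<le> j \<and> j < n \<longrightarrow> l j < l (Suc j)) \<and>
     (\<forall>j. 1 \<le> j \<and> j < n \<longrightarrow> pair_valid_match L m (eps j) (l j) (l (Suc j)) (S j) (S (Suc j)))"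

text \<open>The state is
  (V, E, c) where vertices v_{i,j} are pairs (i,j), edges are pairs of vertices and c counts
  the constant-time checks performed (equality of base packets / time condition).\<close>

type_synonym state = "(nat \<times> nat) set \<times> ((nat \<times> nat) \<times> (nat \<times> nat)) set \<times> nat"

definition inner_step ::
  "(nat \<Rightarrow> 'b packet) \<Rightarrow> (nat \<Rightarrow> 'b packet) \<Rightarrow> (nat \<Rightarrow> real) \<Rightarrow> nat \<Rightarrow> nat \<Rightarrow> state \<Rightarrow> nat \<Rightarrow> state" where
  "inner_step L S eps i j st k = (case st of (V, E, c) \<Rightarrow>
     if (k, j - 1) \<in> V \<and> delta_valid (eps (j - 1)) (L k) (L i) (S (j - 1)) (S j)
     then (insert (i, j) V, insert ((i, j), (k, j - 1)) E, Suc c)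
     else (V, E, Suc c))"

definition outer_step ::
  "(nat \<Rightarrow> 'b packet) \<Rightarrow> (nat \<Rightarrow> 'b packet) \<Rightarrow> nat \<Rightarrow> (nat \<Rightarrow> real) \<Rightarrow> state \<Rightarrow> nat \<Rightarrow> state" where
  "outer_step L S n eps st i = (case st of (V, E, c) \<Rightarrow>
     let st1 = (if base (L i) = base (S 1) then insert (i, 1) V else V, E, Suc c)
     in foldl (\<lambda>st' j. foldl (inner_step L S eps i j) st' [1..<i]) st1 [2..<Suc n])"

definition sigMatch_run ::
  "(nat \<Rightarrow> 'b packet) \<Rightarrow> nat \<Rightarrow> (nat \<Rightarrow> 'b packet) \<Rightarrow> nat \<Rightarrow> (nat \<Rightarrow> real) \<Rightarrow> state" where
  "sigMatch_run L m S n eps = foldl (outer_step L S n eps) ({}, {}, 0) [1..<Suc m]"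

definition sigMatch_V where "sigMatch_V L m S n eps = fst (sigMatch_run L m S n eps)"
definition sigMatch_E where "sigMatch_E L m S n eps = fst (snd (sigMatch_run L m S n eps))"
definition sigMatch_cost where "sigMatch_cost L m S n eps = snd (snd (sigMatch_run L m S n eps))"

definition is_dpath :: "'v set \<Rightarrow> ('v \<times> 'v) set \<Rightarrow> 'v list \<Rightarrow> bool" where
  "is_dpath V E xs \<longleftrightarrow> xs \<noteq> [] \<and> set xs \<subseteq> V \<and>
     (\<forall>i. Suc i < length xs \<longrightarrow> (xs ! i, xs ! Suc i) \<in> E)"

definition match_path :: "(nat \<Rightarrow> nat) \<Rightarrow> nat \<Rightarrow> (nat \<times> nat) list" where
  "match_path l n = map (\<lambda>j. (l j, j)) (rev [1..<Suc n])"

end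

theory Submission
  imports Defs
begin

inductive R :: "(nat \<Rightarrow> 'b packet) \<Rightarrow> (nat \<Rightarrow> 'b packet) \<Rightarrow> nat \<Rightarrow> (nat \<Rightarrow> real) \<Rightarrow> nat \<Rightarrow> nat \<Rightarrow> bool"
  for L S n eps where
  r1: "1 \<le> i \<Longrightarrow> base (L i) = base (S 1) \<Longrightarrow> R L S n eps i 1"
| r2: "R L S n eps k (j - 1) \<Longrightarrow> k < i \<Longrightarrow> 2 \<le> j \<Longrightarrow> j \<le> n \<Longrightarrow>
       delta_valid (eps (j - 1)) (L k) (L i) (S (j - 1)) (S j) \<Longrightarrow> R L S n eps i j"

lemma R_pos: "R L S n eps i j \<Longrightarrow> 1 \<le> i \<and> 1 \<le> j"
  by (induction rule: R.induct) auto

lemma R_ge1: "R L S n eps i j \<Longrightarrow> Suc 0 \<le> i"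
  by (induction rule: R.induct) auto

lemma inner_fold:
  assumes "1 \<le> j"
  shows "foldl (inner_step L S eps i j) (V,E,c) ks =
    (if \<exists>k\<in>set ks. (k,j-1)\<in>V \<and> delta_valid (eps (j - 1)) (L k) (L i) (S (j - 1)) (S j)
     then insert (i,j) V else V,
     E \<union> {((i,j),(k,j-1)) | k. k\<in>set ks \<and> (k,j-1)\<in>V \<and> delta_valid (eps (j - 1)) (L k) (L i) (S (j - 1)) (S j)},
     c + length ks)"
  using assms
proof (induction ks arbitrary: V E c)
  case Nil
  then show ?case by simp
next
  case (Cons a ks)
  have ne: "\<And>k. (k, j-1) \<noteq> (i,j)" using Cons.prems by auto
  show ?case
  proof (cases "(a,j-1)\<in>V \<and> delta_valid (eps (j - 1)) (L a) (L i) (S (j - 1)) (S j)")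
    case True
    have "foldl (inner_step L S eps i j) (V,E,c) (a#ks) =
      foldl (inner_step L S eps i j) (insert (i,j) V, insert ((i, j), (a, j - 1)) E, Suc c) ks"
      by (simp only: foldl_Cons inner_step_def prod.case if_P[OF True])
    then show ?thesis using True ne Cons.prems by (auto simp: Cons.IH)
  next
    case False
    have "foldl (inner_step L S eps i j) (V,E,c) (a#ks) =
      foldl (inner_step L S eps i j) (V, E, Suc c) ks"
      by (simp only: foldl_Cons inner_step_def prod.case if_not_P[OF False])
    then show ?thesis using False ne Cons.prems by (auto simp: Cons.IH)
  qed
qed

lemma middle_fold:
  assumes "\<forall>j\<in>set js. 1 \<le> j" "\<forall>k\<in>set ks. k \<noteq> i"
  shows "foldl (\<lambda>st' j. foldl (inner_step L S eps i j) st' ks) (V,E,c) js =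
    (V \<union> {(i,j) | j. j\<in>set js \<and> (\<exists>k\<in>set ks. (k,j-1)\<in>V \<and> delta_valid (eps (j - 1)) (L k) (L i) (S (j - 1)) (S j))},
     E \<union> {((i,j),(k,j-1)) | j k. j\<in>set js \<and> k\<in>set ks \<and> (k,j-1)\<in>V \<and> delta_valid (eps (j - 1)) (L k) (L i) (S (j - 1)) (S j)},
     c + length js * length ks)"
  using assms
proof (induction js arbitrary: V E c)
  case Nil
  then show ?case by simp
next
  case (Cons a js)
  let ?V1 = "if \<exists>k\<in>set ks. (k,a-1)\<in>V \<and> delta_valid (eps (a - 1)) (L k) (L i) (S (a - 1)) (S a)
     then insert (i,a) V else V"
  have eq: "\<And>k j'. k \<in> set ks \<Longrightarrow> ((k,j') \<in> ?V1) = ((k,j') \<in> V)"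
    using Cons.prems by auto
  show ?case
    using Cons.prems
    apply (simp add: inner_fold Cons.IH)
    apply (intro conjI)
    subgoal using eq by (auto split: if_splits)
    subgoal using eq by auto
    done
qed

fun cst :: "nat \<Rightarrow> nat \<Rightarrow> nat" where
  "cst n 0 = 0"
| "cst n (Suc t) = cst n t + 1 + (n - 1) * t"

lemma outer_fold:
  "foldl (outer_step L S n eps) ({},{},0) [1..<Suc t] =
    ({(i,j). i \<le> t \<and> R L S n eps i j},
     {((i,j),(k,j-1)) | i j k. k < i \<and> i \<le> t \<and> 2 \<le> j \<and> j \<le> n \<and> R L S n eps k (j-1)
        \<and> delta_valid (eps (j - 1)) (L k) (L i) (S (j - 1)) (S j)},
     cst n t)"
proof (induction t)
  case 0
  then show ?case by (auto dest: R_pos)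
next
  case (Suc t)
  have js: "\<forall>j\<in>set [2..<Suc n]. 1 \<le> j" by auto
  have ks: "\<forall>k\<in>set [1..<Suc t]. k \<noteq> Suc t" by auto
  let ?V = "{(i,j). i \<le> t \<and> R L S n eps i j}"
  let ?V1 = "if base (L (Suc t)) = base (S 1) then insert (Suc t, 1) ?V else ?V"
  have eq: "\<And>k j'. k \<in> set [1..<Suc t] \<Longrightarrow> ((k,j') \<in> ?V1) = (R L S n eps k j')"
    by auto
  have Rs: "R L S n eps (Suc t) j \<longleftrightarrow> (j = 1 \<and> base (L (Suc t)) = base (S 1)) \<or>
     (\<exists>k. k < Suc t \<and> 2 \<le> j \<and> j \<le> n \<and> R L S n eps k (j-1) \<and>
        delta_valid (eps (j - 1)) (L k) (L (Suc t)) (S (j - 1)) (S j))" for j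
    by (subst R.simps) auto
  let ?E = "{((i,j),(k,j-1)) | i j k. k < i \<and> i \<le> t \<and> 2 \<le> j \<and> j \<le> n \<and> R L S n eps k (j-1)
        \<and> delta_valid (eps (j - 1)) (L k) (L i) (S (j - 1)) (S j)}"
  have st: "foldl (outer_step L S n eps) ({},{},0) [1..<Suc (Suc t)] = outer_step L S n eps (?V, ?E, cst n t) (Suc t)"
    by (simp only: upt_Suc_append[of 1 "Suc t"] foldl_append Suc.IH) simp
  also have "\<dots> = foldl (\<lambda>st' j. foldl (inner_step L S eps (Suc t) j) st' [1..<Suc t]) (?V1, ?E, Suc (cst n t)) [2..<Suc n]"
    by (simp only: outer_step_def Let_def prod.case)
  also have "\<dots> = (?V1 \<union> {(Suc t,j) | j. j\<in>set [2..<Suc n] \<and> (\<exists>k\<in>set [1..<Suc t]. (k,j-1)\<in>?V1 \<and> delta_valid (eps (j - 1)) (L k) (L (Suc t)) (S (j - 1)) (S j))},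
     ?E \<union> {((Suc t,j),(k,j-1)) | j k. j\<in>set [2..<Suc n] \<and> k\<in>set [1..<Suc t] \<and> (k,j-1)\<in>?V1 \<and> delta_valid (eps (j - 1)) (L k) (L (Suc t)) (S (j - 1)) (S j)},
     Suc (cst n t) + length [2..<Suc n] * length [1..<Suc t])"
    by (rule middle_fold[OF js ks])
  also have "\<dots> = ({(i,j). i \<le> Suc t \<and> R L S n eps i j},
     {((i,j),(k,j-1)) | i j k. k < i \<and> i \<le> Suc t \<and> 2 \<le> j \<and> j \<le> n \<and> R L S n eps k (j-1)
        \<and> delta_valid (eps (j - 1)) (L k) (L i) (S (j - 1)) (S j)},
     cst n (Suc t))"
  proof (rule prod_eqI)
    show "fst (?V1 \<union> {(Suc t,j) | j. j\<in>set [2..<Suc n] \<and> (\<exists>k\<in>set [1..<Suc t]. (k,j-1)\<in>?V1 \<and> delta_valid (eps (j - 1)) (L k) (L (Suc t)) (S (j - 1)) (S j))},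
     ?E \<union> {((Suc t,j),(k,j-1)) | j k. j\<in>set [2..<Suc n] \<and> k\<in>set [1..<Suc t] \<and> (k,j-1)\<in>?V1 \<and> delta_valid (eps (j - 1)) (L k) (L (Suc t)) (S (j - 1)) (S j)},
     Suc (cst n t) + length [2..<Suc n] * length [1..<Suc t]) = fst ({(i,j). i \<le> Suc t \<and> R L S n eps i j},
     {((i,j),(k,j-1)) | i j k. k < i \<and> i \<le> Suc t \<and> 2 \<le> j \<and> j \<le> n \<and> R L S n eps k (j-1)
        \<and> delta_valid (eps (j - 1)) (L k) (L i) (S (j - 1)) (S j)},
     cst n (Suc t))"
      apply (simp only: fst_conv)
      apply (rule set_eqI)
      apply clarify
      subgoal for a b
        apply (cases "a = Suc t")
        subgoal using eq Rs[of b] apply (auto simp del: upt_Suc)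
          by (meson R_ge1 atLeastLessThan_iff)+
        subgoal using eq R_pos by (auto simp del: upt_Suc)
        done
      done
  next
    show "snd (?V1 \<union> {(Suc t,j) | j. j\<in>set [2..<Suc n] \<and> (\<exists>k\<in>set [1..<Suc t]. (k,j-1)\<in>?V1 \<and> delta_valid (eps (j - 1)) (L k) (L (Suc t)) (S (j - 1)) (S j))},
     ?E \<union> {((Suc t,j),(k,j-1)) | j k. j\<in>set [2..<Suc n] \<and> k\<in>set [1..<Suc t] \<and> (k,j-1)\<in>?V1 \<and> delta_valid (eps (j - 1)) (L k) (L (Suc t)) (S (j - 1)) (S j)},
     Suc (cst n t) + length [2..<Suc n] * length [1..<Suc t]) = snd ({(i,j). i \<le> Suc t \<and> R L S n eps i j},
     {((i,j),(k,j-1)) | i j k. k < i \<and> i \<le> Suc t \<and> 2 \<le> j \<and> j \<le> n \<and> R L S n eps k (j-1)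
        \<and> delta_valid (eps (j - 1)) (L k) (L i) (S (j - 1)) (S j)},
     cst n (Suc t))"
      apply (simp only: snd_conv)
      apply (rule prod_eqI)
      subgoal
        apply (simp only: fst_conv)
        apply (rule set_eqI)
        apply clarify
        subgoal for a b c d
          apply (cases "a = Suc t")
          subgoal using eq by (auto simp del: upt_Suc dest: R_ge1)
          subgoal using eq by (auto simp del: upt_Suc dest: R_ge1)
          done
        done
      subgoal by auto
      done
  qed
  finally show ?case .
qed

lemma aux: "(d::nat)*t*t + d*t \<le> d * Suc t * Suc t" by (simp add: algebra_simps)

lemma cst_bound: "cst n t \<le> t + (n - 1) * t * t"
proof (induction t)
  case 0 then show ?case by simp
next
  case (Suc t)
  have "cst n (Suc t) = cst n t + 1 + (n - 1) * t" by simp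
  also have "\<dots> \<le> t + (n - 1) * t * t + 1 + (n - 1) * t" using Suc.IH by simp
  also have "\<dots> \<le> Suc t + (n - 1) * Suc t * Suc t" using aux[of "n-1" t] by simp
  finally show ?case .
qed

lemma cst_bound2: "1 \<le> n \<Longrightarrow> cst n t \<le> 1 * (t^2 * n)"
proof -
  assume n: "1 \<le> n"
  have "t \<le> t * t" by (cases t) auto
  then have "t + (n - 1) * t * t \<le> t * t + (n - 1) * t * t" by simp
  also have "\<dots> = t^2 * n" using n by (cases n) (auto simp: power2_eq_square algebra_simps)
  finally show ?thesis using cst_bound[of n t] by simp
qed

lemma match_path_nth: "i < n \<Longrightarrow> match_path l n ! i = (l (n - i), n - i)"
proof -
  assume i: "i < n"
  have l: "length [1..<Suc n] = n" by simp
  have "rev [1..<Suc n] ! i = [1..<Suc n] ! (length [1..<Suc n] - Suc i)" using i l by (intro rev_nth) simp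
  also have "\<dots> = [1..<Suc n] ! (n - Suc i)" by (simp only: l)
  also have "\<dots> = n - i" using i by (subst nth_upt) auto
  finally have r: "rev [1..<Suc n] ! i = n - i" .
  have "match_path l n ! i = (\<lambda>j. (l j, j)) (rev [1..<Suc n] ! i)"
    unfolding match_path_def by (rule nth_map) (use i l in simp)
  then show ?thesis using r by simp
qed

lemma match_path_len: "length (match_path l n) = n"
  unfolding match_path_def by simp

lemma match_path_set: "set (match_path l n) = (\<lambda>j. (l j, j)) ` {1..n}"
  unfolding match_path_def by auto

lemma dpath_match:
  assumes "1 \<le> n"
  shows "is_dpath V E (match_path l n) \<longleftrightarrow>
    (\<forall>j. 1 \<le> j \<and> j \<le> n \<longrightarrow> (l j, j) \<in> V) \<and>
    (\<forall>j. 2 \<le> j \<and> j \<le> n \<longrightarrow> ((l j, j), (l (j - 1), j - 1)) \<in> E)"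
proof -
  have ne: "match_path l n \<noteq> []" using assms match_path_len[of l n] by auto
  have s: "set (match_path l n) \<subseteq> V \<longleftrightarrow> (\<forall>j. 1 \<le> j \<and> j \<le> n \<longrightarrow> (l j, j) \<in> V)"
    by (auto simp: match_path_set)
  have e: "(\<forall>i. Suc i < length (match_path l n) \<longrightarrow> (match_path l n ! i, match_path l n ! Suc i) \<in> E)
     \<longleftrightarrow> (\<forall>j. 2 \<le> j \<and> j \<le> n \<longrightarrow> ((l j, j), (l (j - 1), j - 1)) \<in> E)"
  proof
    assume h: "\<forall>i. Suc i < length (match_path l n) \<longrightarrow> (match_path l n ! i, match_path l n ! Suc i) \<in> E"
    show "\<forall>j. 2 \<le> j \<and> j \<le> n \<longrightarrow> ((l j, j), (l (j - 1), j - 1)) \<in> E"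
    proof (intro allI impI)
      fix j assume j: "2 \<le> j \<and> j \<le> n"
      have "Suc (n - j) < length (match_path l n)" using j by (simp only: match_path_len) arith
      then have "(match_path l n ! (n - j), match_path l n ! Suc (n - j)) \<in> E" using h by blast
      moreover have "match_path l n ! Suc (n - j) = (l (j-1), j-1)"
      proof -
        have a: "Suc (n-j) < n" "n - Suc (n - j) = j - 1" using j by arith+
        show ?thesis using match_path_nth[of "Suc (n-j)" n l] a by simp
      qed
      moreover have "match_path l n ! (n - j) = (l j, j)"
        using match_path_nth[of "n-j" n l] j by simp
      ultimately show "((l j, j), (l (j - 1), j - 1)) \<in> E" by simp
    qed
  next
    assume h: "\<forall>j. 2 \<le> j \<and> j \<le> n \<longrightarrow> ((l j, j), (l (j - 1), j - 1)) \<in> E"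
    show "\<forall>i. Suc i < length (match_path l n) \<longrightarrow> (match_path l n ! i, match_path l n ! Suc i) \<in> E"
    proof (intro allI impI)
      fix i assume i: "Suc i < length (match_path l n)"
      then have i': "Suc i < n" by (simp add: match_path_len)
      have a: "2 \<le> n - i" "n - i \<le> n" using i' by arith+
      have "((l (n - i), n - i), (l (n - i - 1), n - i - 1)) \<in> E" by (rule h[rule_format, of "n-i", OF conjI[OF a(1) a(2)]])
      moreover have "match_path l n ! i = (l (n - i), n - i)" using i' by (simp add: match_path_nth)
      moreover have "match_path l n ! Suc i = (l (n - i - 1), n - i - 1)"
      proof -
        have "n - Suc i = n - i - 1" by arith
        then show ?thesis using match_path_nth[of "Suc i" n l] i' by (simp only:)
      qed
      ultimately show "(match_path l n ! i, match_path l n ! Suc i) \<in> E" by simp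
    qed
  qed
  show ?thesis unfolding is_dpath_def using ne s e by blast
qed

theorem theorem1:
  fixes L S :: "nat \<Rightarrow> 'b packet" and m n :: nat and eps :: "nat \<Rightarrow> real"
  assumes "is_seq L m" and "is_seq S n" and "2 \<le> n"
    and "\<forall>j. 1 \<le> j \<and> j < n \<longrightarrow> eps j > 0"
  shows "(\<exists>C::nat. \<forall>(L'::nat \<Rightarrow> 'b packet) m' (S'::nat \<Rightarrow> 'b packet) n' (eps'::nat \<Rightarrow> real).
            is_seq L' m' \<and> is_seq S' n' \<and> 1 \<le> n' \<and> (\<forall>j. 1 \<le> j \<and> j < n' \<longrightarrow> eps' j > 0) \<longrightarrow>
            sigMatch_cost L' m' S' n' eps' \<le> C * (m'^2 * n'))
    \<and> (\<forall>l. eps_valid_match L m S n eps l \<longrightarrow>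
          is_dpath (sigMatch_V L m S n eps) (sigMatch_E L m S n eps) (match_path l n)
          \<and> (\<forall>j. 1 \<le> j \<and> j < n \<longrightarrow> l j < l (Suc j)))
    \<and> (\<forall>l. is_dpath (sigMatch_V L m S n eps) (sigMatch_E L m S n eps) (match_path l n) \<longrightarrow>
          eps_valid_match L m S n eps l
          \<and> (\<forall>j. 1 \<le> j \<and> j < n \<longrightarrow> l j < l (Suc j)))"
proof (intro conjI)
  show "\<exists>C::nat. \<forall>(L'::nat \<Rightarrow> 'b packet) m' (S'::nat \<Rightarrow> 'b packet) n' (eps'::nat \<Rightarrow> real).
            is_seq L' m' \<and> is_seq S' n' \<and> 1 \<le> n' \<and> (\<forall>j. 1 \<le> j \<and> j < n' \<longrightarrow> eps' j > 0) \<longrightarrow>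
            sigMatch_cost L' m' S' n' eps' \<le> C * (m'^2 * n')"
    apply (rule exI[of _ 1])
    apply (intro allI impI)
    apply (simp only: sigMatch_cost_def sigMatch_run_def outer_fold snd_conv)
    using cst_bound2 by blast
next
  have V: "sigMatch_V L m S n eps = {(i,j). i \<le> m \<and> R L S n eps i j}"
    by (simp only: sigMatch_V_def sigMatch_run_def outer_fold fst_conv)
  have E: "sigMatch_E L m S n eps = {((i,j),(k,j-1)) | i j k. k < i \<and> i \<le> m \<and> 2 \<le> j \<and> j \<le> n \<and> R L S n eps k (j-1)
        \<and> delta_valid (eps (j - 1)) (L k) (L i) (S (j - 1)) (S j)}"
    by (simp only: sigMatch_E_def sigMatch_run_def outer_fold fst_conv snd_conv)
  have n1: "1 \<le> n" using assms(3) by simp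
  show "\<forall>l. eps_valid_match L m S n eps l \<longrightarrow>
          is_dpath (sigMatch_V L m S n eps) (sigMatch_E L m S n eps) (match_path l n)
          \<and> (\<forall>j. 1 \<le> j \<and> j < n \<longrightarrow> l j < l (Suc j))"
  proof (intro allI impI)
    fix l assume vm: "eps_valid_match L m S n eps l"
    have mono: "\<forall>j. 1 \<le> j \<and> j < n \<longrightarrow> l j < l (Suc j)" using vm unfolding eps_valid_match_def by blast
    have rng: "\<And>j. 1 \<le> j \<Longrightarrow> j \<le> n \<Longrightarrow> 1 \<le> l j \<and> l j \<le> m" using vm unfolding eps_valid_match_def by blast
    have pv: "\<And>j. 1 \<le> j \<Longrightarrow> j < n \<Longrightarrow> pair_valid_match L m (eps j) (l j) (l (Suc j)) (S j) (S (Suc j))"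
      using vm unfolding eps_valid_match_def by blast
    have RR: "j \<le> n \<longrightarrow> R L S n eps (l j) j" if "1 \<le> j" for j
      using that
    proof (induction j rule: dec_induct)
      case base
      show ?case
      proof
        assume "1 \<le> n"
        have "1 \<le> l 1" using rng[of 1] n1 by simp
        moreover have "base (L (l 1)) = base (S 1)"
          using pv[of 1] assms(3) unfolding pair_valid_match_def delta_valid_def by simp
        ultimately show "R L S n eps (l 1) 1" by (rule r1)
      qed
    next
      case (step j)
      show ?case
      proof
        assume sj: "Suc j \<le> n"
        have p: "pair_valid_match L m (eps j) (l j) (l (Suc j)) (S j) (S (Suc j))" using pv step sj by simp
        show "R L S n eps (l (Suc j)) (Suc j)"
          apply (rule r2[where k = "l j"])
          using step sj p unfolding pair_valid_match_def by auto
      qed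
    qed
    have "is_dpath (sigMatch_V L m S n eps) (sigMatch_E L m S n eps) (match_path l n)"
      unfolding dpath_match[OF n1]
    proof (intro conjI allI impI)
      fix j assume "1 \<le> j \<and> j \<le> n"
      then show "(l j, j) \<in> sigMatch_V L m S n eps" using RR rng V by auto
    next
      fix j assume j: "2 \<le> j \<and> j \<le> n"
      have p: "pair_valid_match L m (eps (j-1)) (l (j-1)) (l j) (S (j-1)) (S j)"
      proof -
        have a: "1 \<le> j - 1" "j - 1 < n" "Suc (j - 1) = j" using j by arith+
        show ?thesis using pv[of "j-1"] a by simp
      qed
      have a2: "1 \<le> j - 1" "j - 1 \<le> n" using j by arith+
      have "R L S n eps (l (j-1)) (j-1)" using mp[OF RR[OF a2(1)] a2(2)] .
      then show "((l j, j), (l (j - 1), j - 1)) \<in> sigMatch_E L m S n eps"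
        unfolding E using p j unfolding pair_valid_match_def by blast
    qed
    then show "is_dpath (sigMatch_V L m S n eps) (sigMatch_E L m S n eps) (match_path l n)
          \<and> (\<forall>j. 1 \<le> j \<and> j < n \<longrightarrow> l j < l (Suc j))" using mono by blast
  qed
  show "\<forall>l. is_dpath (sigMatch_V L m S n eps) (sigMatch_E L m S n eps) (match_path l n) \<longrightarrow>
          eps_valid_match L m S n eps l
          \<and> (\<forall>j. 1 \<le> j \<and> j < n \<longrightarrow> l j < l (Suc j))"
  proof (intro allI impI)
    fix l assume "is_dpath (sigMatch_V L m S n eps) (sigMatch_E L m S n eps) (match_path l n)"
    then have hv: "\<And>j. 1 \<le> j \<Longrightarrow> j \<le> n \<Longrightarrow> (l j, j) \<in> sigMatch_V L m S n eps"
      and he: "\<And>j. 2 \<le> j \<Longrightarrow> j \<le> n \<Longrightarrow> ((l j, j), (l (j - 1), j - 1)) \<in> sigMatch_E L m S n eps"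
      unfolding dpath_match[OF n1] by blast+
    have rng: "1 \<le> l j \<and> l j \<le> m" if "1 \<le> j" "j \<le> n" for j
      using hv[OF that] V R_ge1 by fastforce
    have ed: "l j < l (Suc j) \<and> delta_valid (eps j) (L (l j)) (L (l (Suc j))) (S j) (S (Suc j))"
      if "1 \<le> j" "j < n" for j
    proof -
      have "((l (Suc j), Suc j), (l j, j)) \<in> sigMatch_E L m S n eps" using he[of "Suc j"] that by simp
      then show ?thesis unfolding E by auto
    qed
    have "eps_valid_match L m S n eps l"
      unfolding eps_valid_match_def pair_valid_match_def
      using rng ed by auto
    moreover have "\<forall>j. 1 \<le> j \<and> j < n \<longrightarrow> l j < l (Suc j)" using ed by blast
    ultimately show "eps_valid_match L m S n eps l \<and> (\<forall>j. 1 \<le> j \<and> j < n \<longrightarrow> l j < l (Suc j))" by blast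
  qed
qed

end
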